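(* Consider the redundancy system with $N$ parallel servers and $d\le N$ replicas per job described in the context. Let $\boldsymbol{\omega}=(\omega_1,\dots,\omega_N)$ be a workload state and let $\omega_{(1)}\ge\omega_{(2)}\ge\dots\ge\omega_{(N)}$ denote its ordered values. If $\omega_{(1)}=\omega_{(2)}=\dots=\omega_{(d)}$, then every future workload state $\boldsymbol{\omega}_{\mathrm{new}}$ also satisfies $\omega_{\mathrm{new},(1)}=\dots=\omega_{\mathrm{new},(d)}$. That is, once the $d$ largest workloads are equal, they remain equal forever.
   Context: System: $N$ parallel servers; jobs arrive according to a Poisson process of rate $\lambda$. Each arriving job is replicated into $d$ replicas ($1\le d\le N$), which are sent to $d$ distinct servers chosen uniformly at random without replacement. Replicas are served first-come-first-served at each server; a job is completed as soon as the first of its replicas completes service, at which moment the other $d-1$ replicas are instantaneously abandoned (cancel-on-completion). The service requirements of the $d$ replicas are i.i.d. copies of a nonnegative random variable $B$ (independent across jobs). The workload $\omega_i$ of server $i$ is the real amount of work server $i$ must perform to become idle in the absence of further arrivals; between arrivals each positive workload decreases at unit rate. If a job arrives with sampled servers $s_1,\dots,s_d$ and realized replica requirements $b_1,\dots,b_d$, then the new workload at server $s_l$ is $\max\{\min_{j\in\{1,\dots,d\}}(\omega_{s_j}+b_j),\ \omega_{s_l}\}$ for $l=1,\dots,d$, and the workloads of the other servers are unchanged. *)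

theory Defs
  imports Main Complex_Main
begin

text \<open>Servers are indexed by 0..N-1; a workload state is a function nat => real
  (only the values at i < N matter).\<close>

definition ordv :: "nat \<Rightarrow> (nat \<Rightarrow> real) \<Rightarrow> nat \<Rightarrow> real" where
  "ordv N w k = rev (sort (map w [0..<N])) ! (k - 1)"

definition drain :: "real \<Rightarrow> (nat \<Rightarrow> real) \<Rightarrow> (nat \<Rightarrow> real)" where
  "drain t w = (\<lambda>i. if w i > 0 then max (w i - t) 0 else w i)"

text \<open>Arrival of a job with sampled server set S and replica requirements b j (j in S).\<close>
definition arrive :: "nat set \<Rightarrow> (nat \<Rightarrow> real) \<Rightarrow> (nat \<Rightarrow> real) \<Rightarrow> (nat \<Rightarrow> real)" where
  "arrive S b w = (\<lambda>i. if i \<in> S then max (Min ((\<lambda>j. w j + b j) ` S)) (w i) else w i)"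

inductive reach :: "nat \<Rightarrow> nat \<Rightarrow> (nat \<Rightarrow> real) \<Rightarrow> (nat \<Rightarrow> real) \<Rightarrow> bool"
  for N d :: nat and w :: "nat \<Rightarrow> real" where
  refl: "reach N d w w"
| drain_step: "reach N d w w' \<Longrightarrow> t \<ge> 0 \<Longrightarrow> reach N d w (drain t w')"
| arrive_step: "reach N d w w' \<Longrightarrow> S \<subseteq> {0..<N} \<Longrightarrow> card S = d \<Longrightarrow>
     (\<forall>j\<in>S. b j \<ge> 0) \<Longrightarrow> reach N d w (arrive S b w')"

end

theory Submission
  imports Defs "HOL-Library.Multiset"
begin

definition Gp :: "nat \<Rightarrow> nat \<Rightarrow> (nat \<Rightarrow> real) \<Rightarrow> bool" where
  "Gp N d w = (\<exists>A. A \<subseteq> {0..<N} \<and> d \<le> card A \<and> (\<forall>i\<in>A. \<forall>j<N. w j \<le> w i))"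

lemma count_map_upt:
  "count (mset (map w [0..<N])) v = card {i. i<N \<and> w i = v}"
proof (induction N)
  case 0 then show ?case by simp
next
  case (Suc N)
  have e: "{i. i<Suc N \<and> w i = v} = {i. i<N \<and> w i = v} \<union> (if w N = v then {N} else {})"
    by (auto simp: less_Suc_eq)
  have f: "finite {i. i<N \<and> w i = v}" by simp
  show ?case using Suc f by (simp add: e card_insert_if)
qed

lemma drain_mono2: assumes "t \<ge> 0" "w j \<le> w i" shows "drain t w j \<le> drain t w i"
  using assms unfolding drain_def by auto

lemma Gp_drain: "Gp N d w \<Longrightarrow> t \<ge> 0 \<Longrightarrow> Gp N d (drain t w)"
proof -
  assume "Gp N d w" "t \<ge> 0"
  then obtain A where A: "A \<subseteq> {0..<N}" "d \<le> card A" "\<forall>i\<in>A. \<forall>j<N. w j \<le> w i"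
    unfolding Gp_def by blast
  then have "\<forall>i\<in>A. \<forall>j<N. drain t w j \<le> drain t w i"
    using drain_mono2[OF \<open>t \<ge> 0\<close>] by blast
  then show ?thesis unfolding Gp_def using A by blast
qed

lemma Gp_arrive:
  assumes "Gp N d w" "S \<subseteq> {0..<N}" "card S = d"
  shows "Gp N d (arrive S b w)"
proof -
  obtain A where A: "A \<subseteq> {0..<N}" "d \<le> card A" "\<forall>i\<in>A. \<forall>j<N. w j \<le> w i"
    using assms(1) unfolding Gp_def by blast
  define m where "m = Min ((\<lambda>j. w j + b j) ` S)"
  have ar: "arrive S b w = (\<lambda>i. if i \<in> S then max m (w i) else w i)"
    unfolding arrive_def m_def by simp
  show ?thesis
  proof (cases "\<forall>i\<in>A. m \<le> w i")
    case True
    have "\<forall>i\<in>A. \<forall>j<N. arrive S b w j \<le> arrive S b w i"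
      using True A(3) unfolding ar by auto
    then show ?thesis unfolding Gp_def using A by blast
  next
    case False
    then obtain i0 where i0: "i0 \<in> A" "w i0 < m" by force
    have "\<forall>j<N. w j < m" using i0 A(3) by force
    then have "\<forall>i\<in>S. \<forall>j<N. arrive S b w j \<le> arrive S b w i"
      using assms(2) unfolding ar by force
    then show ?thesis unfolding Gp_def using assms by blast
  qed
qed

lemma Gp_reach: "reach N d w w' \<Longrightarrow> Gp N d w \<Longrightarrow> Gp N d w'"
  by (induction rule: reach.induct) (auto intro: Gp_drain Gp_arrive)

lemma ordv_Gp:
  assumes "1 \<le> d" "d \<le> N"
  shows "(\<forall>k\<in>{1..d}. ordv N w k = ordv N w 1) \<longleftrightarrow> Gp N d w"
proof -
  define xs where "xs = map w [0..<N]"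
  define L where "L = rev (sort xs)"
  have len: "length L = N" unfolding L_def xs_def by simp
  have ms: "mset L = mset xs" unfolding L_def by simp
  have srt: "\<And>i j. i \<le> j \<Longrightarrow> j < N \<Longrightarrow> L ! j \<le> L ! i"
  proof -
    fix i j assume ij: "i \<le> j" "j < N"
    have s: "sorted (rev L)" unfolding L_def by simp
    have "rev L ! (N - 1 - j) \<le> rev L ! (N - 1 - i)"
      using s ij len by (intro sorted_nth_mono) auto
    then show "L ! j \<le> L ! i" using ij len by (simp add: rev_nth)
  qed
  have setL: "set L = w ` {0..<N}" using ms unfolding xs_def
    by (metis set_map set_mset_mset set_upt)
  have top: "\<And>j. j < N \<Longrightarrow> w j \<le> L ! 0"
  proof -
    fix j assume "j < N"
    then have "w j \<in> set L" using setL by auto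
    then obtain p where "p < N" "L ! p = w j" using len by (metis in_set_conv_nth)
    then show "w j \<le> L ! 0" using srt[of 0 p] by simp
  qed
  have ordv: "\<And>k. ordv N w k = L ! (k - 1)" unfolding ordv_def L_def xs_def by simp
  have cnt: "\<And>v. count (mset L) v = card {i. i<N \<and> w i = v}"
    using ms count_map_upt unfolding xs_def by metis
  show ?thesis
  proof
    assume H: "\<forall>k\<in>{1..d}. ordv N w k = ordv N w 1"
    have tk: "take d L = replicate d (L ! 0)"
    proof (rule nth_equalityI)
      show "length (take d L) = length (replicate d (L ! 0))" using len assms by simp
      fix i assume "i < length (take d L)"
      then have "i < d" by simp
      then show "take d L ! i = replicate d (L ! 0) ! i"
        using H[rule_format, of "i+1"] ordv by simp
    qed
    have "count (mset (take d L)) (L ! 0) \<le> count (mset L) (L ! 0)"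
      by (metis append_take_drop_id count_union le_add1 mset_append)
    then have "d \<le> card {i. i<N \<and> w i = L ! 0}" using tk cnt by simp
    then show "Gp N d w" unfolding Gp_def using top by (intro exI[of _ "{i. i<N \<and> w i = L ! 0}"]) auto
  next
    assume "Gp N d w"
    then obtain A where A: "A \<subseteq> {0..<N}" "d \<le> card A" "\<forall>i\<in>A. \<forall>j<N. w j \<le> w i"
      unfolding Gp_def by blast
    have "A \<noteq> {}" using A(2) assms by auto
    then obtain a where a: "a \<in> A" by blast
    have "L ! 0 \<in> set L" using len assms by simp
    then obtain p where p: "p < N" "L ! 0 = w p" using setL by auto
    have aN: "a < N" using A(1) a by auto
    have va: "w a = L ! 0"
    proof (rule antisym)
      show "w a \<le> L ! 0" using top[OF aN] .
      have "w p \<le> w a" using A(3) a p(1) by blast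
      then show "L ! 0 \<le> w a" using p(2) by simp
    qed
    have Asub: "A \<subseteq> {i. i<N \<and> w i = L ! 0}"
    proof
      fix i
      assume iA: "i \<in> A"
      then have iN: "i < N" using A(1) by auto
      have "w a \<le> w i" using A(3) iA aN by blast
      moreover have "w i \<le> L ! 0" using top[OF iN] .
      ultimately show "i \<in> {i. i<N \<and> w i = L ! 0}" using iN va by simp
    qed
    have "d \<le> card {i. i<N \<and> w i = L ! 0}"
      using A(2) card_mono[OF _ Asub] by simp
    then have C: "d \<le> count (mset L) (L ! 0)" using cnt by simp
    show "\<forall>k\<in>{1..d}. ordv N w k = ordv N w 1"
    proof (rule ccontr)
      assume "\<not> ?thesis"
      then obtain k where k: "1 \<le> k" "k \<le> d" "L ! (k - 1) \<noteq> L ! 0" using ordv by auto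
      define q where "q = k - 1"
      have q: "q < d" "L ! q < L ! 0" using k srt[of 0 q] assms unfolding q_def by force+
      have nd: "L ! 0 \<notin> set (drop q L)"
      proof
        assume "L ! 0 \<in> set (drop q L)"
        then obtain r where r: "r < length (drop q L)" "drop q L ! r = L ! 0"
          by (metis in_set_conv_nth)
        then have "L ! (q + r) = L ! 0" "q + r < N" using len by auto
        then show False using srt[of q "q+r"] q by simp
      qed
      have "count (mset L) (L ! 0) = count (mset (take q L)) (L ! 0) + count (mset (drop q L)) (L ! 0)"
        by (metis append_take_drop_id count_union mset_append)
      also have "\<dots> = count (mset (take q L)) (L ! 0)" using nd by (simp add: count_mset_0_iff)
      also have "\<dots> \<le> size (mset (take q L))" by (rule count_le_size)
      also have "\<dots> \<le> q" by simp
      finally show False using C q by simp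
    qed
  qed
qed

theorem mainTheorem1:
  fixes N d :: nat and w w' :: "nat \<Rightarrow> real"
  assumes "1 \<le> d" and "d \<le> N"
    and "\<forall>i<N. 0 \<le> w i"
    and "\<forall>k\<in>{1..d}. ordv N w k = ordv N w 1"
    and "reach N d w w'"
  shows "\<forall>k\<in>{1..d}. ordv N w' k = ordv N w' 1"
  using ordv_Gp[OF assms(1,2)] Gp_reach[OF assms(5)] assms(4) by blast

end
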